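(* Let $n\ge1$, $U_n$ the family of bounded subsets of $\mathbb R^n$, and let $\mu:U_n\to B_2$ be a measure that is derivable on the closed set $A\in U_n$ (so $A$ is compact). Then the set $\mathrm{supp}_A\, d\mu=\{x\in A: d\mu(x)=1\}$ is finite.
   Context: $B_2=\{0,1\}$. $\mu:U_n\to B_2$ is a measure if for every sequence $(A_p)$ of pairwise disjoint sets of $U_n$ with $\bigcup_pA_p\in U_n$, the set $\{p:\mu(A_p)=1\}$ is finite and $\mu(\bigcup_pA_p)$ equals the number of such $p$ modulo 2. For bounded $B$, $d(B)=\sup_{x,y\in B}\|x-y\|$ (Euclidean). $\mu$ is derivable at $x\in A$ (where $A\in U_n$) if there exist $\varepsilon>0$ and $a\in B_2$ such that for all $B\in U_n$ with $x\in B$ and $d(B)<\varepsilon$, $\mu(B)=a$; this $a$ (necessarily $a=\mu(\{x\})$) is the derivative $d\mu(x)$. $\mu$ is derivable on $A$ if it is derivable at every $x\in A$. *)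

theory Defs
  imports "HOL-Analysis.Analysis"
begin

text \<open>U_n = bounded subsets of the Euclidean space 'a (of dimension n = DIM('a) \<ge> 1).
  B_2 = {0,1} is represented by the naturals 0 and 1.\<close>

definition B2_measure :: "('a::euclidean_space set \<Rightarrow> nat) \<Rightarrow> bool" where
  "B2_measure \<mu> \<longleftrightarrow>
     (\<forall>B. bounded B \<longrightarrow> \<mu> B \<in> {0, 1}) \<and>
     (\<forall>A :: nat \<Rightarrow> 'a set.
        (\<forall>p. bounded (A p)) \<and> disjoint_family A \<and> bounded (\<Union>p. A p) \<longrightarrow>
          finite {p. \<mu> (A p) = 1} \<and> \<mu> (\<Union>p. A p) = card {p. \<mu> (A p) = 1} mod 2)"

definition derivable_at :: "('a::euclidean_space set \<Rightarrow> nat) \<Rightarrow> 'a \<Rightarrow> bool" where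
  "derivable_at \<mu> x \<longleftrightarrow>
     (\<exists>\<epsilon>>0. \<exists>a\<in>{0, 1}. \<forall>B. bounded B \<and> x \<in> B \<and> diameter B < \<epsilon> \<longrightarrow> \<mu> B = a)"

definition measure_deriv :: "('a::euclidean_space set \<Rightarrow> nat) \<Rightarrow> 'a \<Rightarrow> nat" where
  "measure_deriv \<mu> x =
     (THE a. a \<in> {0, 1} \<and> (\<exists>\<epsilon>>0. \<forall>B. bounded B \<and> x \<in> B \<and> diameter B < \<epsilon> \<longrightarrow> \<mu> B = a))"

definition derivable_on :: "('a::euclidean_space set \<Rightarrow> nat) \<Rightarrow> 'a set \<Rightarrow> bool" where
  "derivable_on \<mu> A \<longleftrightarrow> (\<forall>x\<in>A. derivable_at \<mu> x)"

end

theory Submission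
  imports Defs
begin

lemma deriv_singleton:
  assumes "derivable_at \<mu> x"
  shows "measure_deriv \<mu> x = \<mu> {x}"
proof -
  obtain e a where e: "e > 0" "a \<in> {0,1}"
    and h: "\<forall>B. bounded B \<and> x \<in> B \<and> diameter B < e \<longrightarrow> \<mu> B = a"
    using assms unfolding derivable_at_def by blast
  have ax: "\<mu> {x} = a" using h e by auto
  have "(THE a. a \<in> {0, 1} \<and> (\<exists>\<epsilon>>0. \<forall>B. bounded B \<and> x \<in> B \<and> diameter B < \<epsilon> \<longrightarrow> \<mu> B = a)) = a"
  proof (rule the_equality)
    show "a \<in> {0, 1} \<and> (\<exists>\<epsilon>>0. \<forall>B. bounded B \<and> x \<in> B \<and> diameter B < \<epsilon> \<longrightarrow> \<mu> B = a)"
      using e h by blast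
  next
    fix b assume "b \<in> {0, 1} \<and> (\<exists>\<epsilon>>0. \<forall>B. bounded B \<and> x \<in> B \<and> diameter B < \<epsilon> \<longrightarrow> \<mu> B = b)"
    then obtain d where "d > 0" "\<forall>B. bounded B \<and> x \<in> B \<and> diameter B < d \<longrightarrow> \<mu> B = b" by blast
    then have "\<mu> {x} = b" by auto
    then show "b = a" using ax by simp
  qed
  then show ?thesis unfolding measure_deriv_def using ax by simp
qed

theorem theorem5p13:
  fixes \<mu> :: "'a::euclidean_space set \<Rightarrow> nat" and A :: "'a set"
  assumes "B2_measure \<mu>" and "bounded A" and "closed A" and "derivable_on \<mu> A"
  shows "finite {x \<in> A. measure_deriv \<mu> x = 1}"
proof (rule ccontr)
  assume "infinite {x \<in> A. measure_deriv \<mu> x = 1}"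
  then obtain f :: "nat \<Rightarrow> 'a" where f: "inj f" "range f \<subseteq> {x \<in> A. measure_deriv \<mu> x = 1}"
    using infinite_countable_subset by blast
  have one: "\<mu> {f p} = 1" for p
  proof -
    have "f p \<in> A" "measure_deriv \<mu> (f p) = 1" using f(2) by auto
    then show ?thesis using deriv_singleton assms(4) unfolding derivable_on_def by metis
  qed
  have dj: "disjoint_family (\<lambda>p. {f p})"
    using f(1) unfolding disjoint_family_on_def inj_def by auto
  have "(\<Union>p. {f p}) \<subseteq> A" using f(2) by auto
  then have bd: "bounded (\<Union>p. {f p})" using assms(2) bounded_subset by blast
  have "finite {p. \<mu> {f p} = 1}"
    using assms(1) dj bd unfolding B2_measure_def by auto
  then show False using one by simp
qed

end
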